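(* Let $X,Y$ be proper geodesically complete Gromov-hyperbolic Busemann spaces that are vertically convergent with respect to boundary points $\infty_X,\infty_Y$, with height functions $h_X,h_Y$ based at these points, and let $X\bowtie Y$ carry an admissible metric $d_\bowtie$ arising from an admissible monotone norm. For any $(x_1,y_1),(x_2,y_2)\in X\bowtie Y$, $$d_\bowtie((x_1,y_1),(x_2,y_2))\le d_X(x_1,x_2)+d_Y(y_1,y_2)+\min\{d_X(x_1,x_2),d_Y(y_1,y_2)\}.$$
   Context: Height function $h=-\beta$, $\beta(x)=\lim_{t\to\infty}[d(\gamma(t),x)-d(\gamma(t),x_0)]$ for a ray $\gamma$ representing the base point. $X\bowtie Y=\{(x,y):h_X(x)=-h_Y(y)\}$. A norm $N$ on $\mathbb{R}^2$ with $N(1,1)=1$ is admissible if $N(a,b)\ge(|a|+|b|)/2$ and monotone if non-decreasing in each coordinate on $[0,\infty)^2$. $d_\bowtie$ is the infimum over continuous paths $(\gamma_X,\gamma_Y):[0,1]\to X\bowtie Y$ of $\sup_{0=t_0<\dots<t_n=1}\sum_i N(d_X(\gamma_X(t_i),\gamma_X(t_{i+1})),d_Y(\gamma_Y(t_i),\gamma_Y(t_{i+1})))$. Busemann space and vertical convergence: as usual (distance between arc-length parametrized geodesics is convex; asymptotic rays to the base point converge after a time shift). *)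

theory Defs
  imports "HOL-Analysis.Analysis"
begin

definition proper_metric :: "'a::metric_space itself \<Rightarrow> bool" where
  "proper_metric _ \<longleftrightarrow> (\<forall>(x::'a) r. compact (cball x r))"

definition isometric_on :: "real set \<Rightarrow> (real \<Rightarrow> 'a::metric_space) \<Rightarrow> bool" where
  "isometric_on I c \<longleftrightarrow> (\<forall>s\<in>I. \<forall>t\<in>I. dist (c s) (c t) = \<bar>s - t\<bar>)"

definition geodesic_space :: "'a::metric_space itself \<Rightarrow> bool" where
  "geodesic_space _ \<longleftrightarrow> (\<forall>(x::'a) y. \<exists>c. c 0 = x \<and> c (dist x y) = y \<and> isometric_on {0..dist x y} c)"

definition geodesically_complete :: "'a::metric_space itself \<Rightarrow> bool" where
  "geodesically_complete _ \<longleftrightarrow>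
     (\<forall>(c::real \<Rightarrow> 'a) a b. a \<le> b \<and> isometric_on {a..b} c \<longrightarrow>
        (\<exists>l. isometric_on UNIV l \<and> (\<forall>t\<in>{a..b}. l t = c t)))"

definition busemann_space :: "'a::metric_space itself \<Rightarrow> bool" where
  "busemann_space T \<longleftrightarrow> geodesic_space T \<and>
     (\<forall>(c::real \<Rightarrow> 'a) c'.
        (\<forall>s\<in>{0..1}. \<forall>t\<in>{0..1}. dist (c s) (c t) = \<bar>s - t\<bar> * dist (c 0) (c 1)) \<and>
        (\<forall>s\<in>{0..1}. \<forall>t\<in>{0..1}. dist (c' s) (c' t) = \<bar>s - t\<bar> * dist (c' 0) (c' 1)) \<longrightarrow>
        (\<forall>t\<in>{0..1}. dist (c t) (c' t) \<le> (1 - t) * dist (c 0) (c' 0) + t * dist (c 1) (c' 1)))"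

definition gromov_product :: "'a::metric_space \<Rightarrow> 'a \<Rightarrow> 'a \<Rightarrow> real" where
  "gromov_product w x y = (dist x w + dist y w - dist x y) / 2"

definition gromov_hyperbolic :: "'a::metric_space itself \<Rightarrow> bool" where
  "gromov_hyperbolic _ \<longleftrightarrow> (\<exists>\<delta>\<ge>0. \<forall>(w::'a) x y z.
      gromov_product w x z \<ge> min (gromov_product w x y) (gromov_product w y z) - \<delta>)"

definition geodesic_ray :: "(real \<Rightarrow> 'a::metric_space) \<Rightarrow> bool" where
  "geodesic_ray g \<longleftrightarrow> isometric_on {0..} g"

definition asymptotic_rays :: "(real \<Rightarrow> 'a::metric_space) \<Rightarrow> (real \<Rightarrow> 'a) \<Rightarrow> bool" where
  "asymptotic_rays g r \<longleftrightarrow> (\<exists>C. \<forall>t\<ge>0. dist (g t) (r t) \<le> C)"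

text \<open>Vertical convergence w.r.t. the boundary point represented by the ray g.\<close>
definition vertically_convergent :: "(real \<Rightarrow> 'a::metric_space) \<Rightarrow> bool" where
  "vertically_convergent g \<longleftrightarrow>
     (\<forall>r. geodesic_ray r \<and> asymptotic_rays r g \<longrightarrow>
        (\<exists>\<tau>. ((\<lambda>t. dist (r t) (g (t + \<tau>))) \<longlongrightarrow> 0) at_top))"

definition busemann_fun :: "(real \<Rightarrow> 'a::metric_space) \<Rightarrow> 'a \<Rightarrow> 'a \<Rightarrow> real" where
  "busemann_fun g x0 x = Lim at_top (\<lambda>t. dist (g t) x - dist (g t) x0)"

definition height :: "(real \<Rightarrow> 'a::metric_space) \<Rightarrow> 'a \<Rightarrow> 'a \<Rightarrow> real" where
  "height g x0 x = - busemann_fun g x0 x"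

definition horo_product ::
  "(real \<Rightarrow> 'a::metric_space) \<Rightarrow> 'a \<Rightarrow> (real \<Rightarrow> 'b::metric_space) \<Rightarrow> 'b \<Rightarrow> ('a \<times> 'b) set" where
  "horo_product gX x0 gY y0 = {(x, y). height gX x0 x = - height gY y0 y}"

definition norm_R2 :: "(real \<Rightarrow> real \<Rightarrow> real) \<Rightarrow> bool" where
  "norm_R2 N \<longleftrightarrow>
     (\<forall>a b. N a b \<ge> 0) \<and> (\<forall>a b. N a b = 0 \<longleftrightarrow> a = 0 \<and> b = 0) \<and>
     (\<forall>l a b. N (l * a) (l * b) = \<bar>l\<bar> * N a b) \<and>
     (\<forall>a b a' b'. N (a + a') (b + b') \<le> N a b + N a' b')"

definition admissible_norm :: "(real \<Rightarrow> real \<Rightarrow> real) \<Rightarrow> bool" where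
  "admissible_norm N \<longleftrightarrow> norm_R2 N \<and> N 1 1 = 1 \<and> (\<forall>a b. N a b \<ge> (\<bar>a\<bar> + \<bar>b\<bar>) / 2)"

definition monotone_norm :: "(real \<Rightarrow> real \<Rightarrow> real) \<Rightarrow> bool" where
  "monotone_norm N \<longleftrightarrow>
     (\<forall>a b a' b'. 0 \<le> a \<and> a \<le> a' \<and> 0 \<le> b \<and> b \<le> b' \<longrightarrow> N a b \<le> N a' b')"

definition N_length :: "(real \<Rightarrow> real \<Rightarrow> real) \<Rightarrow> (real \<Rightarrow> 'a::metric_space \<times> 'b::metric_space) \<Rightarrow> ereal" where
  "N_length N p = (SUP (n, t) \<in> {(n::nat, t::nat \<Rightarrow> real). 0 < n \<and> t 0 = 0 \<and> t n = 1 \<and>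
        (\<forall>i<n. t i < t (Suc i))}.
      ereal (\<Sum>i<n. N (dist (fst (p (t i))) (fst (p (t (Suc i)))))
                       (dist (snd (p (t i))) (snd (p (t (Suc i)))))))"

definition d_bowtie ::
  "(real \<Rightarrow> real \<Rightarrow> real) \<Rightarrow> (real \<Rightarrow> 'a::metric_space) \<Rightarrow> 'a \<Rightarrow> (real \<Rightarrow> 'b::metric_space) \<Rightarrow> 'b
   \<Rightarrow> 'a \<times> 'b \<Rightarrow> 'a \<times> 'b \<Rightarrow> ereal" where
  "d_bowtie N gX x0 gY y0 P Q = (INF p \<in> {p. continuous_on {0..1} p \<and>
        p ` {0..1} \<subseteq> horo_product gX x0 gY y0 \<and> p 0 = P \<and> p 1 = Q}. N_length N p)"

end

theory Submission
  imports Defs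
begin

lemma beta_lim:
  assumes "geodesic_ray (g :: real \<Rightarrow> 'a::metric_space)"
  shows "\<exists>L. ((\<lambda>t. dist (g t) x - t) \<longlongrightarrow> L) at_top \<and> (\<forall>t\<ge>0. L \<le> dist (g t) x - t)"
proof -
  have iso: "\<And>s t. s \<ge> 0 \<Longrightarrow> t \<ge> 0 \<Longrightarrow> dist (g s) (g t) = \<bar>s - t\<bar>"
    using assms by (auto simp: geodesic_ray_def isometric_on_def)
  define \<psi> where "\<psi> t = dist (g t) x - t" for t
  have mono: "\<psi> t' \<le> \<psi> t" if "0 \<le> t" "t \<le> t'" for t t'
  proof -
    have "dist (g t') x \<le> dist (g t') (g t) + dist (g t) x" by (rule dist_triangle)
    with iso[of t' t] that show ?thesis by (simp add: \<psi>_def)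
  qed
  have bdd: "\<psi> t \<ge> - dist (g 0) x" if "t \<ge> 0" for t
  proof -
    have "dist (g t) (g 0) \<le> dist (g t) x + dist x (g 0)" by (rule dist_triangle)
    with iso[of t 0] that show ?thesis by (simp add: \<psi>_def dist_commute)
  qed
  define L where "L = Inf (\<psi> ` {0..})"
  have bddb: "bdd_below (\<psi> ` {0..})" using bdd by (auto intro!: bdd_belowI[of _ "- dist (g 0) x"])
  have lb: "L \<le> \<psi> t" if "t \<ge> 0" for t unfolding L_def using bddb that by (auto intro!: cInf_lower)
  have "(\<psi> \<longlongrightarrow> L) at_top"
  proof (rule order_tendstoI)
    fix y assume "y < L"
    then show "eventually (\<lambda>t. y < \<psi> t) at_top" using lb
      by (auto simp: eventually_at_top_linorder intro!: exI[of _ 0] less_le_trans[OF \<open>y < L\<close>])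
  next
    fix y assume "L < y"
    then obtain t0 where t0: "t0 \<ge> 0" "\<psi> t0 < y" using cInf_lessD[of "\<psi> ` {0..}" y] unfolding L_def by auto
    then show "eventually (\<lambda>t. \<psi> t < y) at_top" using mono
      by (auto simp: eventually_at_top_linorder intro!: exI[of _ t0] le_less_trans[OF _ t0(2)])
  qed
  hence "((\<lambda>t. dist (g t) x - t) \<longlongrightarrow> L) at_top" unfolding \<psi>_def .
  moreover have "\<forall>t\<ge>0. L \<le> dist (g t) x - t" using lb unfolding \<psi>_def by blast
  ultimately show ?thesis by blast
qed

lemma bus_tendsto:
  assumes "geodesic_ray (g :: real \<Rightarrow> 'a::metric_space)"
  shows "((\<lambda>t. dist (g t) x - dist (g t) x0) \<longlongrightarrow> busemann_fun g x0 x) at_top"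
proof -
  obtain L1 where L1: "((\<lambda>t. dist (g t) x - t) \<longlongrightarrow> L1) at_top" using beta_lim[OF assms] by blast
  obtain L2 where L2: "((\<lambda>t. dist (g t) x0 - t) \<longlongrightarrow> L2) at_top" using beta_lim[OF assms] by blast
  have "((\<lambda>t. (dist (g t) x - t) - (dist (g t) x0 - t)) \<longlongrightarrow> L1 - L2) at_top" by (intro tendsto_diff L1 L2)
  hence *: "((\<lambda>t. dist (g t) x - dist (g t) x0) \<longlongrightarrow> L1 - L2) at_top" by simp
  hence "busemann_fun g x0 x = L1 - L2" unfolding busemann_fun_def by (intro tendsto_Lim) auto
  with * show ?thesis by simp
qed

lemma bus_diff:
  assumes "geodesic_ray (g :: real \<Rightarrow> 'a::metric_space)"
  shows "((\<lambda>t. dist (g t) y - dist (g t) z) \<longlongrightarrow> busemann_fun g x0 y - busemann_fun g x0 z) at_top"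
  using tendsto_diff[OF bus_tendsto[OF assms, of y x0] bus_tendsto[OF assms, of z x0]] by simp

lemma bus_lip:
  assumes "geodesic_ray (g :: real \<Rightarrow> 'a::metric_space)"
  shows "\<bar>busemann_fun g x0 y - busemann_fun g x0 z\<bar> \<le> dist y z"
proof -
  have "((\<lambda>t. \<bar>dist (g t) y - dist (g t) z\<bar>) \<longlongrightarrow> \<bar>busemann_fun g x0 y - busemann_fun g x0 z\<bar>) at_top"
    by (rule tendsto_rabs[OF bus_diff[OF assms]])
  then show ?thesis
  proof (rule tendsto_upperbound)
    show "\<forall>\<^sub>F t in at_top. \<bar>dist (g t) y - dist (g t) z\<bar> \<le> dist y z"
      proof (intro always_eventually allI)
      fix t
      show "\<bar>dist (g t) y - dist (g t) z\<bar> \<le> dist y z"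
        using abs_dist_diff_le[of y "g t" z] by (simp add: dist_commute)
    qed
  qed simp
qed

lemma bus_convex:
  assumes bs: "busemann_space TYPE('a)" and gr: "geodesic_ray (g::real\<Rightarrow>'a::metric_space)"
    and c: "\<forall>s\<in>{0..1}. \<forall>t\<in>{0..1}. dist (c s) (c t) = \<bar>s - t\<bar> * dist (c 0) (c 1)" and t: "t \<in> {0..1}"
  shows "busemann_fun g x0 (c t) \<le> (1-t) * busemann_fun g x0 (c 0) + t * busemann_fun g x0 (c 1)"
proof -
  have key: "dist (c t) p \<le> (1-t) * dist (c 0) p + t * dist (c 1) p" for p
  proof -
    have "\<forall>s\<in>{0..1}. \<forall>t\<in>{0..1}. dist ((\<lambda>_. p) s) ((\<lambda>_. p) t) = \<bar>s - t\<bar> * dist ((\<lambda>_. p) 0) ((\<lambda>_. p) 1)"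
      by simp
    from conjunct2[OF bs[unfolded busemann_space_def], rule_format, OF conjI[OF c this] t]
    show ?thesis by simp
  qed
  have lim2: "((\<lambda>s. (1-t) * (dist (g s) (c 0) - dist (g s) x0) + t * (dist (g s) (c 1) - dist (g s) x0))
     \<longlongrightarrow> (1-t) * busemann_fun g x0 (c 0) + t * busemann_fun g x0 (c 1)) at_top"
    by (intro tendsto_intros bus_tendsto gr)
  show ?thesis
  proof (rule tendsto_le[OF trivial_limit_at_top_linorder lim2 bus_tendsto[OF gr]])
    show "\<forall>\<^sub>F s in at_top. dist (g s) (c t) - dist (g s) x0
      \<le> (1-t) * (dist (g s) (c 0) - dist (g s) x0) + t * (dist (g s) (c 1) - dist (g s) x0)"
    proof (intro always_eventually allI)
      fix s
      have "dist (g s) (c t) \<le> (1-t) * dist (g s) (c 0) + t * dist (g s) (c 1)"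
        using key[of "g s"] by (simp add: dist_commute)
      then show "dist (g s) (c t) - dist (g s) x0
      \<le> (1-t) * (dist (g s) (c 0) - dist (g s) x0) + t * (dist (g s) (c 1) - dist (g s) x0)"
        by (simp add: algebra_simps)
    qed
  qed
qed

lemma bus_line:
  assumes bs: "busemann_space TYPE('a)" and gr: "geodesic_ray (g::real\<Rightarrow>'a::metric_space)"
    and l: "isometric_on UNIV l" and H: "H > 0"
    and lH: "busemann_fun g x0 (l H) = busemann_fun g x0 (l 0) - H" and u: "u \<le> H"
  shows "busemann_fun g x0 (l u) = busemann_fun g x0 (l 0) - u"
proof -
  define b where "b = busemann_fun g x0"
  have ld: "dist (l s) (l t) = \<bar>s - t\<bar>" for s t using l by (simp add: isometric_on_def)
  have conv: "b (l (p + \<theta>*(w - p))) \<le> (1-\<theta>) * b (l p) + \<theta> * b (l w)" if "p \<le> w" "\<theta> \<in> {0..1}" for p w \<theta>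
  proof -
    define c where "c = (\<lambda>s. l (p + s * (w - p)))"
    have "\<forall>s\<in>{0..1}. \<forall>t\<in>{0..1}. dist (c s) (c t) = \<bar>s - t\<bar> * dist (c 0) (c 1)"
    proof (intro ballI)
      fix s t :: real
      have "p + s * (w - p) - (p + t * (w - p)) = (s - t) * (w - p)" by (simp add: algebra_simps)
      then show "dist (c s) (c t) = \<bar>s - t\<bar> * dist (c 0) (c 1)"
        using that(1) by (simp add: c_def ld abs_mult)
    qed
    from bus_convex[OF bs gr this that(2)] show ?thesis by (simp add: c_def b_def)
  qed
  have lip: "\<bar>b (l s) - b (l t)\<bar> \<le> \<bar>s - t\<bar>" for s t
    using bus_lip[OF gr, of x0 "l s" "l t"] ld[of s t] by (simp add: b_def)
  have lH': "b (l H) = b (l 0) - H" using lH by (simp add: b_def)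
  show ?thesis
  proof (cases "u \<ge> 0")
    case True
    have "b (l (0 + (u/H) * (H - 0))) \<le> (1 - u/H) * b (l 0) + (u/H) * b (l H)"
      using conv[of 0 H "u/H"] H True u by auto
    also have "\<dots> = b (l 0) - u" using H by (simp add: lH' field_simps)
    finally have "b (l u) \<le> b (l 0) - u" using H by simp
    moreover have "b (l u) \<ge> b (l 0) - u" using lip[of u 0] True by auto
    ultimately show ?thesis by (simp add: b_def)
  next
    case False
    define \<theta> where "\<theta> = -u/(H-u)"
    have Hu: "H - u > 0" using False H by simp
    have th: "\<theta> \<in> {0..1}" using False H Hu by (auto simp: \<theta>_def field_simps)
    have "u + \<theta> * (H - u) = 0" using Hu by (simp add: \<theta>_def)
    hence "b (l 0) \<le> (1-\<theta>) * b (l u) + \<theta> * b (l H)" using conv[of u H \<theta>] th False H by simp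
    hence "(H - u) * b (l 0) \<le> (H - u) * ((1-\<theta>) * b (l u) + \<theta> * b (l H))"
      using Hu by (simp add: mult_left_mono)
    also have "\<dots> = ((H - u) * (1-\<theta>)) * b (l u) + ((H - u) * \<theta>) * b (l H)"
      by (simp add: algebra_simps)
    also have "(H - u) * (1-\<theta>) = H" using Hu by (simp add: \<theta>_def field_simps)
    also have "(H - u) * \<theta> = - u" using Hu by (simp add: \<theta>_def field_simps)
    also have "H * b (l u) + - u * b (l H) = H * b (l u) - u * (b (l 0) - H)"
      by (simp add: lH')
    finally have "H * (b (l 0) - u) \<le> H * b (l u)" by (simp add: algebra_simps)
    hence "b (l u) \<ge> b (l 0) - u" using H by simp
    moreover have "b (l u) \<le> b (l 0) - u" using lip[of u 0] False by auto
    ultimately show ?thesis by (simp add: b_def)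
  qed
qed

lemma bus_cont:
  assumes gr: "geodesic_ray (g::real\<Rightarrow>'a::metric_space)"
  shows "continuous_on S (busemann_fun g x0)"
proof (rule lipschitz_on_continuous_on)
  show "1-lipschitz_on S (busemann_fun g x0)"
    unfolding lipschitz_on_def
  proof (intro conjI ballI)
    fix y z assume "y \<in> S" "z \<in> S"
    show "dist (busemann_fun g x0 y) (busemann_fun g x0 z) \<le> 1 * dist y z"
      using bus_lip[OF gr, of x0 y z] by (simp add: dist_real_def)
  qed simp
qed

lemma up_point:
  assumes pr: "proper_metric TYPE('a)" and bs: "busemann_space TYPE('a)"
    and gr: "geodesic_ray (g::real\<Rightarrow>'a::metric_space)" and H: "H > 0"
  shows "\<exists>q. dist x q = H \<and> busemann_fun g x0 q = busemann_fun g x0 x - H"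
proof -
  define b where "b = busemann_fun g x0"
  have gs: "geodesic_space TYPE('a)" using bs by (simp add: busemann_space_def)
  have iso: "\<And>s t. s \<ge> 0 \<Longrightarrow> t \<ge> 0 \<Longrightarrow> dist (g s) (g t) = \<bar>s - t\<bar>"
    using gr by (auto simp: geodesic_ray_def isometric_on_def)
  obtain L\<beta> where L\<beta>: "((\<lambda>t. dist (g t) x - t) \<longlongrightarrow> L\<beta>) at_top" "\<forall>t\<ge>0. L\<beta> \<le> dist (g t) x - t"
    using beta_lim[OF gr] by blast
  have approx: "\<exists>q. dist x q = H \<and> b q \<le> b x - H + \<epsilon>" if "\<epsilon> > 0" for \<epsilon>
  proof -
    have "eventually (\<lambda>t. dist (g t) x - t < L\<beta> + \<epsilon>) at_top"
      using order_tendstoD(2)[OF L\<beta>(1)] that by simp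
    moreover have "eventually (\<lambda>t. t \<ge> H + dist (g 0) x) at_top" by (rule eventually_ge_at_top)
    moreover have "eventually (\<lambda>t. t \<ge> (0::real)) at_top" by (rule eventually_ge_at_top)
    ultimately have ev: "eventually (\<lambda>t. dist (g t) x - t < L\<beta> + \<epsilon> \<and> t \<ge> H + dist (g 0) x \<and> t \<ge> 0) at_top"
      by eventually_elim auto
    obtain s where s: "dist (g s) x - s < L\<beta> + \<epsilon>" "s \<ge> H + dist (g 0) x" "s \<ge> 0"
      using eventually_happens[OF ev] by auto
    define D where "D = dist x (g s)"
    have "dist (g s) (g 0) \<le> dist (g s) x + dist x (g 0)" by (rule dist_triangle)
    hence DH: "D \<ge> H" using iso[of s 0] s by (simp add: D_def dist_commute)
    obtain c where c: "c 0 = x" "c D = g s" "isometric_on {0..D} c"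
      using gs[unfolded geodesic_space_def, rule_format, of x "g s"] unfolding D_def by blast
    define q where "q = c H"
    have cd: "\<And>s t. s \<in> {0..D} \<Longrightarrow> t \<in> {0..D} \<Longrightarrow> dist (c s) (c t) = \<bar>s - t\<bar>"
      using c(3) by (simp add: isometric_on_def)
    have dq: "dist x q = H" using cd[of 0 H] c(1) H DH by (simp add: q_def)
    have dqg: "dist q (g s) = D - H" using cd[of H D] c(2) H DH by (simp add: q_def)
    have "b q - b x \<le> \<epsilon> - H" unfolding b_def
    proof (rule tendsto_le[OF trivial_limit_at_top_linorder _ bus_diff[OF gr, of q x]])
      show "((\<lambda>_. \<epsilon> - H) \<longlongrightarrow> \<epsilon> - H) at_top" by simp
      show "eventually (\<lambda>u. dist (g u) q - dist (g u) x \<le> \<epsilon> - H) at_top"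
        using eventually_ge_at_top[of s]
      proof eventually_elim
        case (elim u)
        have "dist (g u) q \<le> dist (g u) (g s) + dist (g s) q" by (rule dist_triangle)
        also have "\<dots> = (u - s) + (D - H)" using iso[of u s] elim s(3) dqg by (simp add: dist_commute)
        finally have 1: "dist (g u) q \<le> (u - s) + (D - H)" .
        have 2: "L\<beta> + u \<le> dist (g u) x" using L\<beta>(2)[rule_format, of u] elim s(3) by linarith
        have 3: "D - s < L\<beta> + \<epsilon>" using s(1) by (simp add: D_def dist_commute)
        show ?case using 1 2 3 by linarith
      qed
    qed
    thus ?thesis using dq by (intro exI[of _ q]) (simp add: b_def)
  qed
  define S where "S = sphere x H"
  have "compact (cball x H \<inter> sphere x H)"
  proof (rule compact_Int_closed)
    show "compact (cball x H)" using pr by (simp add: proper_metric_def)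
    have "closed {y. dist x y = H}" by (intro closed_Collect_eq continuous_intros)
    then show "closed (sphere x H)" by (simp add: sphere_def)
  qed
  moreover have "cball x H \<inter> sphere x H = S" by (auto simp: S_def)
  ultimately have cS: "compact S" by simp
  have neS: "S \<noteq> {}" using approx[of 1] by (auto simp: S_def)
  obtain q where q: "q \<in> S" "\<forall>y\<in>S. b q \<le> b y"
    using continuous_attains_inf[OF cS neS bus_cont[OF gr]] by (auto simp: b_def)
  have "b q \<le> b x - H"
  proof (rule field_le_epsilon)
    fix e :: real assume "e > 0"
    then obtain q' where q': "dist x q' = H" "b q' \<le> b x - H + e" using approx by blast
    have "q' \<in> S" using q'(1) by (simp add: S_def)
    then have "b q \<le> b q'" using q(2) by blast
    then show "b q \<le> b x - H + e" using q'(2) by linarith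
  qed
  moreover have "b q \<ge> b x - H" using bus_lip[OF gr, of x0 x q] q(1) by (auto simp: S_def b_def)
  ultimately show ?thesis using q(1) by (intro exI[of _ q]) (auto simp: S_def b_def)
qed

lemma vertical_line:
  assumes pr: "proper_metric TYPE('a)" and bs: "busemann_space TYPE('a)"
    and gc: "geodesically_complete TYPE('a)"
    and gr: "geodesic_ray (g::real\<Rightarrow>'a::metric_space)" and H: "H > 0"
  shows "\<exists>l. isometric_on UNIV l \<and> l 0 = x \<and> (\<forall>u\<le>H. busemann_fun g x0 (l u) = busemann_fun g x0 x - u)"
proof -
  obtain q where q: "dist x q = H" "busemann_fun g x0 q = busemann_fun g x0 x - H"
    using up_point[OF pr bs gr H] by blast
  have gs: "geodesic_space TYPE('a)" using bs by (simp add: busemann_space_def)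
  obtain c where c: "c 0 = x" "c H = q" "isometric_on {0..H} c"
    using gs[unfolded geodesic_space_def, rule_format, of x q] unfolding q(1) by blast
  obtain l where l: "isometric_on UNIV l" "\<forall>t\<in>{0..H}. l t = c t"
    using gc[unfolded geodesically_complete_def, rule_format, of 0 H c] c(3) H by auto
  have l0: "l 0 = x" using l(2) c(1) H by auto
  have lH: "l H = q" using l(2) c(2) H by auto
  show ?thesis
  proof (intro exI[of _ l] conjI allI impI l(1) l0)
    fix u assume "u \<le> H"
    from bus_line[OF bs gr l(1) H _ this] show "busemann_fun g x0 (l u) = busemann_fun g x0 x - u"
      using q(2) lH l0 by simp
  qed
qed

lemma glue_lip:
  fixes f k :: "real \<Rightarrow> 'a::metric_space"
  assumes f: "\<forall>s\<in>{0..a}. \<forall>t\<in>{0..a}. dist (f s) (f t) \<le> \<bar>s - t\<bar>"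
    and k: "\<forall>s\<in>{a..L}. \<forall>t\<in>{a..L}. dist (k s) (k t) \<le> \<bar>s - t\<bar>"
    and fk: "f a = k a" and a: "0 \<le> a" "a \<le> L"
    and s: "s \<in> {0..L}" and t: "t \<in> {0..L}"
  shows "dist (if s \<le> a then f s else k s) (if t \<le> a then f t else k t) \<le> \<bar>s - t\<bar>"
proof -
  have cross: "dist (f x) (k y) \<le> \<bar>x - y\<bar>" if "x \<in> {0..a}" "y \<in> {a..L}" for x y
  proof -
    have "dist (f x) (k y) \<le> dist (f x) (f a) + dist (k a) (k y)"
      using dist_triangle[of "f x" "k y" "f a"] fk by simp
    also have "\<dots> \<le> \<bar>x - a\<bar> + \<bar>a - y\<bar>"
      using f[rule_format, of x a] k[rule_format, of a y] that a by (intro add_mono) auto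
    also have "\<dots> = \<bar>x - y\<bar>" using that by auto
    finally show ?thesis .
  qed
  show ?thesis
  proof (cases "s \<le> a"; cases "t \<le> a")
    assume "s \<le> a" "t \<le> a" then show ?thesis using f s t by auto
  next
    assume "s \<le> a" "\<not> t \<le> a" then show ?thesis using cross[of s t] s t by auto
  next
    assume "\<not> s \<le> a" "t \<le> a" then show ?thesis using cross[of t s] s t by (auto simp: dist_commute abs_minus_commute)
  next
    assume "\<not> s \<le> a" "\<not> t \<le> a" then show ?thesis using k s t by auto
  qed
qed

lemma N_length_le:
  assumes adm: "admissible_norm N" and mon: "monotone_norm N" and L: "0 \<le> L"
    and lip: "\<forall>s\<in>{0..1}. \<forall>t\<in>{0..1}. dist (fst (p s)) (fst (p t)) \<le> L * \<bar>s - t\<bar> \<and>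
                  dist (snd (p s)) (snd (p t)) \<le> L * \<bar>s - t\<bar>"
  shows "N_length N p \<le> ereal L"
  unfolding N_length_def
proof (rule SUP_least)
  fix nt assume "nt \<in> {(n::nat, t::nat \<Rightarrow> real). 0 < n \<and> t 0 = 0 \<and> t n = 1 \<and> (\<forall>i<n. t i < t (Suc i))}"
  then obtain n t where nt: "nt = (n,t)" "0 < n" "t 0 = 0" "t n = 1" "\<forall>i<n. t i < t (Suc i)" by auto
  have mono: "t i \<le> t j" if "i \<le> j" "j \<le> n" for i j
    using that
  proof (induction j)
    case 0 then show ?case by simp
  next
    case (Suc j)
    show ?case
    proof (cases "i = Suc j")
      case False
      then have "t i \<le> t j" using Suc by simp
      moreover have "t j < t (Suc j)" using nt(5) Suc.prems by simp
      ultimately show ?thesis by simp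
    qed simp
  qed
  have rng: "t i \<in> {0..1}" if "i \<le> n" for i
    using mono[of 0 i] mono[of i n] that nt(3,4) by auto
  have NLL: "N r r = r" if "r \<ge> 0" for r
  proof -
    have "N (r * 1) (r * 1) = \<bar>r\<bar> * N 1 1" using adm by (simp only: admissible_norm_def norm_R2_def)
    then show ?thesis using adm that by (simp add: admissible_norm_def)
  qed
  have trm: "N (dist (fst (p (t i))) (fst (p (t (Suc i))))) (dist (snd (p (t i))) (snd (p (t (Suc i)))))
      \<le> L * (t (Suc i) - t i)" if "i < n" for i
  proof -
    have lt: "t i < t (Suc i)" using nt(5) that by simp
    have r: "t i \<in> {0..1}" "t (Suc i) \<in> {0..1}" using rng that by auto
    have d: "dist (fst (p (t i))) (fst (p (t (Suc i)))) \<le> L * (t (Suc i) - t i)"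
            "dist (snd (p (t i))) (snd (p (t (Suc i)))) \<le> L * (t (Suc i) - t i)"
      using lip[rule_format, OF r] lt by auto
    have "N (dist (fst (p (t i))) (fst (p (t (Suc i))))) (dist (snd (p (t i))) (snd (p (t (Suc i)))))
       \<le> N (L * (t (Suc i) - t i)) (L * (t (Suc i) - t i))"
      using mon d unfolding monotone_norm_def by (meson zero_le_dist)
    also have "\<dots> = L * (t (Suc i) - t i)" using L lt by (intro NLL) simp
    finally show ?thesis .
  qed
  have "(\<Sum>i<n. N (dist (fst (p (t i))) (fst (p (t (Suc i))))) (dist (snd (p (t i))) (snd (p (t (Suc i))))))
      \<le> (\<Sum>i<n. L * (t (Suc i) - t i))" by (rule sum_mono) (use trm in auto)
  also have "\<dots> = L * (t n - t 0)" by (simp add: sum_distrib_left[symmetric] sum_lessThan_telescope)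
  also have "\<dots> = L" using nt by simp
  finally show "(case nt of (n, t) \<Rightarrow> ereal (\<Sum>i<n. N (dist (fst (p (t i))) (fst (p (t (Suc i)))))
                       (dist (snd (p (t i))) (snd (p (t (Suc i))))))) \<le> ereal L"
    using nt(1) by simp
qed

theorem mainTheorem6:
  fixes gX :: "real \<Rightarrow> 'a::metric_space" and x0 :: 'a
    and gY :: "real \<Rightarrow> 'b::metric_space" and y0 :: 'b
    and N :: "real \<Rightarrow> real \<Rightarrow> real"
    and x1 x2 :: 'a and y1 y2 :: 'b
  assumes "proper_metric TYPE('a)" "geodesically_complete TYPE('a)"
    "gromov_hyperbolic TYPE('a)" "busemann_space TYPE('a)"
    and "proper_metric TYPE('b)" "geodesically_complete TYPE('b)"
    "gromov_hyperbolic TYPE('b)" "busemann_space TYPE('b)"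
    and "geodesic_ray gX" "vertically_convergent gX"
    and "geodesic_ray gY" "vertically_convergent gY"
    and "admissible_norm N" "monotone_norm N"
    and "(x1, y1) \<in> horo_product gX x0 gY y0" "(x2, y2) \<in> horo_product gX x0 gY y0"
  shows "d_bowtie N gX x0 gY y0 (x1, y1) (x2, y2)
     \<le> ereal (dist x1 x2 + dist y1 y2 + min (dist x1 x2) (dist y1 y2))"
proof -
  define bX where "bX = busemann_fun gX x0"
  define bY where "bY = busemann_fun gY y0"
  note grX = assms(9) and grY = assms(11)
  have lipX: "\<bar>bX u - bX u'\<bar> \<le> dist u u'" for u u' unfolding bX_def by (rule bus_lip[OF grX])
  have lipY: "\<bar>bY u - bY u'\<bar> \<le> dist u u'" for u u' unfolding bY_def by (rule bus_lip[OF grY])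
  have hx1: "bY y1 = - bX x1" using assms(15) by (simp add: horo_product_def height_def bX_def bY_def)
  have hx2: "bY y2 = - bX x2" using assms(16) by (simp add: horo_product_def height_def bX_def bY_def)
  have gsX: "geodesic_space TYPE('a)" using assms(4) by (simp add: busemann_space_def)
  have gsY: "geodesic_space TYPE('b)" using assms(8) by (simp add: busemann_space_def)
  define a where "a = dist x1 x2"
  have a0: "a \<ge> 0" by (simp add: a_def)
  obtain c where c: "c 0 = x1" "c a = x2" "isometric_on {0..a} c"
    using gsX[unfolded geodesic_space_def, rule_format, of x1 x2] unfolding a_def by blast
  have cd: "\<And>s t. s \<in> {0..a} \<Longrightarrow> t \<in> {0..a} \<Longrightarrow> dist (c s) (c t) = \<bar>s - t\<bar>"
    using c(3) by (simp add: isometric_on_def)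
  obtain lY where lY: "isometric_on UNIV lY" "lY 0 = y1" "\<forall>u\<le>a+1. bY (lY u) = bY y1 - u"
    using vertical_line[OF assms(5) assms(8) assms(6) grY, where H="a+1" and x=y1 and x0=y0] a0
    unfolding bY_def by auto
  have lYd: "dist (lY s) (lY t) = \<bar>s - t\<bar>" for s t using lY(1) by (simp add: isometric_on_def)
  define v where "v s = bX (c s) - bX x1" for s
  have vb: "\<bar>v s\<bar> \<le> s" if "s \<in> {0..a}" for s
    using lipX[of "c s" "c 0"] cd[of s 0] that a0 c(1) by (simp add: v_def)
  have vl: "\<bar>v s - v t\<bar> \<le> \<bar>s - t\<bar>" if "s \<in> {0..a}" "t \<in> {0..a}" for s t
    using lipX[of "c s" "c t"] cd[of s t] that by (simp add: v_def)
  have v0: "v 0 = 0" using c(1) by (simp add: v_def)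
  define y' where "y' = lY (v a)"
  have vaa: "\<bar>v a\<bar> \<le> a" using vb[of a] a0 by simp
  have vab: "\<bar>v a\<bar> \<le> dist y1 y2"
    using lipY[of y1 y2] hx1 hx2 c(2) by (simp add: v_def abs_minus_commute)
  have by': "bY y' = - bX x2"
    using lY(3)[rule_format, of "v a"] vaa hx1 c(2) by (simp add: y'_def v_def)
  define b' where "b' = dist y' y2"
  have b'0: "b' \<ge> 0" by (simp add: b'_def)
  have b'b: "b' \<le> \<bar>v a\<bar> + dist y1 y2"
  proof -
    have "b' \<le> dist y' y1 + dist y1 y2" unfolding b'_def by (rule dist_triangle)
    moreover have "dist y' y1 = \<bar>v a\<bar>" using lYd[of "v a" 0] lY(2) by (simp add: y'_def)
    ultimately show ?thesis by simp
  qed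
  obtain e where e: "e 0 = y'" "e b' = y2" "isometric_on {0..b'} e"
    using gsY[unfolded geodesic_space_def, rule_format, of y' y2] unfolding b'_def by blast
  have ed: "\<And>s t. s \<in> {0..b'} \<Longrightarrow> t \<in> {0..b'} \<Longrightarrow> dist (e s) (e t) = \<bar>s - t\<bar>"
    using e(3) by (simp add: isometric_on_def)
  obtain lX where lX: "isometric_on UNIV lX" "lX 0 = x2" "\<forall>u\<le>b'+1. bX (lX u) = bX x2 - u"
    using vertical_line[OF assms(1) assms(4) assms(2) grX, where H="b'+1" and x=x2 and x0=x0] b'0
    unfolding bX_def by auto
  have lXd: "dist (lX s) (lX t) = \<bar>s - t\<bar>" for s t using lX(1) by (simp add: isometric_on_def)
  define w where "w u = bY (e u) - bY y'" for u
  have wb: "\<bar>w s\<bar> \<le> s" if "s \<in> {0..b'}" for s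
    using lipY[of "e s" "e 0"] ed[of s 0] that b'0 e(1) by (simp add: w_def)
  have wl: "\<bar>w s - w t\<bar> \<le> \<bar>s - t\<bar>" if "s \<in> {0..b'}" "t \<in> {0..b'}" for s t
    using lipY[of "e s" "e t"] ed[of s t] that by (simp add: w_def)
  have w0: "w 0 = 0" using e(1) by (simp add: w_def)
  have wb': "w b' = 0" using e(2) hx2 by' by (simp add: w_def)
  define L where "L = a + b'"
  have L0: "L \<ge> 0" using a0 b'0 by (simp add: L_def)
  define P where "P T = (if T \<le> a then c T else lX (w (T - a)))" for T
  define Q where "Q T = (if T \<le> a then lY (v T) else e (T - a))" for T
  have Plip: "dist (P s) (P t) \<le> \<bar>s - t\<bar>" if "s \<in> {0..L}" "t \<in> {0..L}" for s t
    unfolding P_def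
  proof (rule glue_lip[where f=c and k="\<lambda>T. lX (w (T - a))"])
    show "\<forall>s\<in>{0..a}. \<forall>t\<in>{0..a}. dist (c s) (c t) \<le> \<bar>s - t\<bar>" using cd by simp
    show "\<forall>s\<in>{a..L}. \<forall>t\<in>{a..L}. dist (lX (w (s - a))) (lX (w (t - a))) \<le> \<bar>s - t\<bar>"
    proof (intro ballI)
      fix s t assume st: "s \<in> {a..L}" "t \<in> {a..L}"
      have "\<bar>w (s - a) - w (t - a)\<bar> \<le> \<bar>(s - a) - (t - a)\<bar>"
        using st by (intro wl) (auto simp: L_def)
      then show "dist (lX (w (s - a))) (lX (w (t - a))) \<le> \<bar>s - t\<bar>" by (simp add: lXd)
    qed
    show "c a = lX (w (a - a))" using c(2) lX(2) w0 by simp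
  qed (use that a0 L_def b'0 in auto)
  have Qlip: "dist (Q s) (Q t) \<le> \<bar>s - t\<bar>" if "s \<in> {0..L}" "t \<in> {0..L}" for s t
    unfolding Q_def
  proof (rule glue_lip[where f="\<lambda>T. lY (v T)" and k="\<lambda>T. e (T - a)"])
    show "\<forall>s\<in>{0..a}. \<forall>t\<in>{0..a}. dist (lY (v s)) (lY (v t)) \<le> \<bar>s - t\<bar>" using vl by (simp add: lYd)
    show "\<forall>s\<in>{a..L}. \<forall>t\<in>{a..L}. dist (e (s - a)) (e (t - a)) \<le> \<bar>s - t\<bar>"
    proof (intro ballI)
      fix s t assume st: "s \<in> {a..L}" "t \<in> {a..L}"
      have "dist (e (s - a)) (e (t - a)) = \<bar>(s - a) - (t - a)\<bar>"
        using st by (intro ed) (auto simp: L_def)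
      then show "dist (e (s - a)) (e (t - a)) \<le> \<bar>s - t\<bar>" by simp
    qed
    show "lY (v a) = e (a - a)" using e(1) by (simp add: y'_def)
  qed (use that a0 L_def b'0 in auto)
  have mem: "(P T, Q T) \<in> horo_product gX x0 gY y0" if "T \<in> {0..L}" for T
  proof -
    have "bY (Q T) = - bX (P T)"
    proof (cases "T \<le> a")
      case True
      have "\<bar>v T\<bar> \<le> T" using vb[of T] that True by simp
      then have "v T \<le> a + 1" using True by simp
      then show ?thesis using True lY(3) hx1 by (simp add: P_def Q_def v_def)
    next
      case False
      define u where "u = T - a"
      have u: "u \<in> {0..b'}" using False that by (simp add: u_def L_def)
      have "w u \<le> b' + 1" using wb[OF u] u by (simp add: abs_le_iff)
      then have "bX (lX (w u)) = bX x2 - w u" using lX(3) by simp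
      then show ?thesis using False by' by (simp add: P_def Q_def w_def u_def)
    qed
    then show ?thesis by (simp add: horo_product_def height_def bX_def bY_def)
  qed
  define p where "p t = (P (L*t), Q (L*t))" for t
  have pLt: "L * t \<in> {0..L}" if "t \<in> {0..1}" for t
    using that L0 by (auto simp: mult_left_le)
  have lipp: "\<forall>s\<in>{0..1}. \<forall>t\<in>{0..1}. dist (fst (p s)) (fst (p t)) \<le> L * \<bar>s - t\<bar> \<and>
                  dist (snd (p s)) (snd (p t)) \<le> L * \<bar>s - t\<bar>"
  proof (intro ballI conjI)
    fix s t :: real assume st: "s \<in> {0..1}" "t \<in> {0..1}"
    have eq: "\<bar>L * s - L * t\<bar> = L * \<bar>s - t\<bar>" using L0 by (simp add: abs_mult right_diff_distrib[symmetric])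
    show "dist (fst (p s)) (fst (p t)) \<le> L * \<bar>s - t\<bar>"
      using Plip[OF pLt[OF st(1)] pLt[OF st(2)]] eq by (simp add: p_def)
    show "dist (snd (p s)) (snd (p t)) \<le> L * \<bar>s - t\<bar>"
      using Qlip[OF pLt[OF st(1)] pLt[OF st(2)]] eq by (simp add: p_def)
  qed
  have cont: "continuous_on {0..1} p"
  proof -
    have c1: "continuous_on {0..1} (\<lambda>t. fst (p t))"
    proof (rule lipschitz_on_continuous_on)
      show "L-lipschitz_on {0..1} (\<lambda>t. fst (p t))"
        unfolding lipschitz_on_def using lipp L0 by (simp add: dist_real_def)
    qed
    have c2: "continuous_on {0..1} (\<lambda>t. snd (p t))"
    proof (rule lipschitz_on_continuous_on)
      show "L-lipschitz_on {0..1} (\<lambda>t. snd (p t))"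
        unfolding lipschitz_on_def using lipp L0 by (simp add: dist_real_def)
    qed
    have "continuous_on {0..1} (\<lambda>t. (fst (p t), snd (p t)))" by (rule continuous_on_Pair[OF c1 c2])
    then show ?thesis by simp
  qed
  have p0: "p 0 = (x1, y1)" using a0 c(1) v0 lY(2) by (simp add: p_def P_def Q_def)
  have p1: "p 1 = (x2, y2)"
  proof (cases "L \<le> a")
    case True
    then have "b' = 0" using b'0 by (simp add: L_def)
    then have "y' = y2" by (simp add: b'_def)
    moreover have "L = a" using \<open>b' = 0\<close> by (simp add: L_def)
    ultimately show ?thesis using True c(2) by (simp add: p_def P_def Q_def y'_def)
  next
    case False
    then show ?thesis using wb' lX(2) e(2) by (simp add: p_def P_def Q_def L_def)
  qed
  have pin: "p ` {0..1} \<subseteq> horo_product gX x0 gY y0"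
    using mem pLt by (auto simp: p_def)
  have "d_bowtie N gX x0 gY y0 (x1, y1) (x2, y2) \<le> N_length N p"
    unfolding d_bowtie_def by (rule INF_lower) (use cont pin p0 p1 in auto)
  also have "\<dots> \<le> ereal L" by (rule N_length_le[OF assms(13) assms(14) L0 lipp])
  also have "L \<le> dist x1 x2 + dist y1 y2 + min (dist x1 x2) (dist y1 y2)"
    using b'b vaa vab by (simp add: L_def a_def)
  then have "ereal L \<le> ereal (dist x1 x2 + dist y1 y2 + min (dist x1 x2) (dist y1 y2))" by simp
  finally show ?thesis .
qed

end
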